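(* Let $f\in\mathcal{R}$ with $f(z)=z+\sum_{n=2}^\infty a_nz^n$ and local inverse $f^{-1}(w)=w+\sum_{n\ge2}A_nw^n$, so $A_2=-a_2$, $A_3=-a_3+2a_2^2$. Then $|A_2|\le1$ and $|A_3|\le\frac43$, and both bounds are attained by some $f\in\mathcal{R}$.
   Context: $\mathbb{D}$ is the open unit disk; $\mathcal{A}$ is the class of holomorphic $f$ on $\mathbb{D}$ with $f(0)=0$, $f'(0)=1$; $\mathcal{R}=\{f\in\mathcal{A}:\operatorname{Re} f'(z)>0\ \forall z\in\mathbb{D}\}$. *)

theory Defs
  imports "HOL-Complex_Analysis.Complex_Analysis"
begin

definition classA :: "(complex \<Rightarrow> complex) set" where
  "classA = {f. f holomorphic_on ball 0 1 \<and> f 0 = 0 \<and> deriv f 0 = 1}"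

definition classR :: "(complex \<Rightarrow> complex) set" where
  "classR = {f \<in> classA. \<forall>z \<in> ball 0 1. Re (deriv f z) > 0}"

definition taylor_coeff :: "(complex \<Rightarrow> complex) \<Rightarrow> nat \<Rightarrow> complex" where
  "taylor_coeff f n = (deriv ^^ n) f 0 / of_nat (fact n)"

definition inv_coeff2 :: "(complex \<Rightarrow> complex) \<Rightarrow> complex" where
  "inv_coeff2 f = - taylor_coeff f 2"

definition inv_coeff3 :: "(complex \<Rightarrow> complex) \<Rightarrow> complex" where
  "inv_coeff3 f = - taylor_coeff f 3 + 2 * (taylor_coeff f 2)^2"

end

theory Submission
  imports Defs
begin

lemma sp_r:
  fixes g :: "complex \<Rightarrow> complex"
  assumes holg: "g holomorphic_on ball 0 1" and gb: "\<And>z. norm z < 1 \<Longrightarrow> norm (g z) \<le> 1"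
   and r: "0 < r" "r < 1"
  shows "r * norm (deriv g 0) \<le> 1 - r^2 * (norm (g 0))^2"
proof -
  define a where "a = of_real r * g 0"
  have rg: "norm (of_real r * g z) < 1" if "norm z < 1" for z
  proof -
    have "norm (of_real r * g z) = r * norm (g z)" using r by (simp add: norm_mult)
    also have "\<dots> \<le> r" using gb[OF that] r by (simp add: mult_left_le)
    finally show ?thesis using r by simp
  qed
  have a1: "norm a < 1" using rg[of 0] by (simp add: a_def)
  have den: "1 - cnj a * (of_real r * g z) \<noteq> 0" if "norm z < 1" for z
  proof
    assume "1 - cnj a * (of_real r * g z) = 0"
    then have "cnj a * (of_real r * g z) = 1" by simp
    then have "norm (cnj a) * norm (of_real r * g z) = 1" by (metis norm_mult norm_one)
    moreover have "norm (cnj a) * norm (of_real r * g z) < 1"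
      using a1 rg[OF that] by (simp add: mult_le_one mult_strict_mono' order_less_imp_le) (metis abs_norm_cancel mult_strict_mono' norm_ge_zero order_less_le mult_1_left less_le_trans mult_le_cancel_right1)
    ultimately show False by simp
  qed
  define h where "h = (\<lambda>z. Moebius_function 0 a (of_real r * g z))"
  have hform: "h = (\<lambda>z. (of_real r * g z - a) / (1 - cnj a * (of_real r * g z)))"
    by (simp add: h_def Moebius_function_simple)
  have holh: "h holomorphic_on ball 0 1"
    unfolding hform using den by (intro holomorphic_intros holg) auto
  have h0: "h 0 = 0" by (simp add: h_def a_def Moebius_function_eq_zero)
  have hb: "norm (h z) < 1" if "norm z < 1" for z
    unfolding h_def using Moebius_function_norm_lt_1[OF a1 rg[OF that]] .
  have "norm (deriv h 0) \<le> 1"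
    using Schwarz_Lemma(2)[OF holh h0 hb, of 0] by simp
  have gd: "(g has_field_derivative deriv g 0) (at 0)"
    using holg by (intro holomorphic_derivI[of _ "ball 0 1"]) auto
  have "(h has_field_derivative (of_real r * deriv g 0) / (1 - cnj a * a)) (at 0)"
  proof -
    have "((\<lambda>z. (of_real r * g z - a) / (1 - cnj a * (of_real r * g z))) has_field_derivative
       ((of_real r * deriv g 0) * (1 - cnj a * (of_real r * g 0)) - (of_real r * g 0 - a) * (- (cnj a * (of_real r * deriv g 0)))) / (1 - cnj a * (of_real r * g 0))^2) (at 0)"
      using den[of 0] by (auto intro!: derivative_eq_intros gd simp: power2_eq_square)
    moreover have "1 - cnj a * a \<noteq> 0" using den[of 0] by (simp add: a_def)
    ultimately show ?thesis unfolding hform by (simp add: a_def[symmetric] power2_eq_square)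
  qed
  then have "deriv h 0 = (of_real r * deriv g 0) / (1 - cnj a * a)" by (rule DERIV_imp_deriv)
  moreover have "cnj a * a = of_real ((norm a)^2)" by (metis complex_norm_square mult.commute)
  ultimately have "deriv h 0 = (of_real r * deriv g 0) / of_real (1 - (norm a)^2)" by simp
  moreover have "(norm a)^2 < 1" using a1 by (simp add: power_less_one_iff abs_square_less_1)
  ultimately have "norm (deriv h 0) = r * norm (deriv g 0) / (1 - (norm a)^2)"
  proof -
    assume e: "deriv h 0 = (of_real r * deriv g 0) / of_real (1 - (norm a)^2)" and q: "(norm a)^2 < 1"
    have "norm (deriv h 0) = norm (of_real r * deriv g 0) / norm (of_real (1 - (norm a)^2) :: complex)"
      unfolding e by (rule norm_divide)
    also have "\<dots> = r * norm (deriv g 0) / (1 - (norm a)^2)"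
      unfolding norm_of_real norm_mult using r q by simp
    finally show ?thesis .
  qed
  with \<open>norm (deriv h 0) \<le> 1\<close> \<open>(norm a)^2 < 1\<close> have "r * norm (deriv g 0) \<le> 1 - (norm a)^2"
    by (simp add: divide_le_eq)
  moreover have "(norm a)^2 = r^2 * (norm (g 0))^2" using r by (simp add: a_def norm_mult power_mult_distrib)
  ultimately show ?thesis by simp
qed

lemma sp:
  fixes g :: "complex \<Rightarrow> complex"
  assumes holg: "g holomorphic_on ball 0 1" and gb: "\<And>z. norm z < 1 \<Longrightarrow> norm (g z) \<le> 1"
  shows "norm (deriv g 0) \<le> 1 - (norm (g 0))^2"
proof -
  define B where "B = norm (deriv g 0)"
  define A where "A = (norm (g 0))^2"
  have ev: "eventually (\<lambda>r. r*B + r^2*A \<le> 1) (at_left (1::real))"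
  proof -
    have "eventually (\<lambda>r. r \<in> {0<..<1}) (at_left (1::real))"
      by (rule eventually_at_left_real) simp
    then show ?thesis
      proof eventually_elim
      case (elim r)
      then show ?case using sp_r[OF holg gb, of r] by (simp add: A_def B_def)
    qed
  qed
  have "((\<lambda>r. r*B + r^2*A) \<longlongrightarrow> 1*B + 1^2*A) (at_left (1::real))"
    by (intro tendsto_intros)
  then have "1*B + 1^2*A \<le> 1"
    using tendsto_le[OF trivial_limit_at_left_real tendsto_const _ ev] by blast
  then show ?thesis by (simp add: A_def B_def)
qed


lemma schwarz2:
  fixes w :: "complex \<Rightarrow> complex"
  assumes holw: "w holomorphic_on ball 0 1" and w0: "w 0 = 0"
    and wb: "\<And>z. norm z < 1 \<Longrightarrow> norm (w z) < 1"
  shows "norm (deriv w 0) \<le> 1" and "norm (deriv (deriv w) 0) / 2 \<le> 1 - (norm (deriv w 0))^2"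
proof -
  show d1: "norm (deriv w 0) \<le> 1" using Schwarz_Lemma(2)[OF holw w0 wb, of 0] by simp
  define g where "g = (\<lambda>z. if z = 0 then deriv w 0 else (w z - w 0) / (z - 0))"
  have holg: "g holomorphic_on ball 0 1"
    unfolding g_def by (rule pole_lemma[OF holw]) simp
  have wg: "w z = z * g z" for z
    by (cases "z = 0") (auto simp: g_def w0)
  have gb: "norm (g z) \<le> 1" if "norm z < 1" for z
  proof (cases "z = 0")
    case True then show ?thesis using d1 by (simp add: g_def)
  next
    case False
    have "norm (w z) \<le> norm z" using Schwarz_Lemma(1)[OF holw w0 wb that] .
    then show ?thesis using False by (simp add: g_def w0 norm_divide divide_le_eq)
  qed
  have gd: "(g has_field_derivative deriv g z) (at z)" if "norm z < 1" for z
    using holg that by (intro holomorphic_derivI[of _ "ball 0 1"]) auto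
  have dw: "deriv w z = g z + z * deriv g z" if "norm z < 1" for z
  proof -
    have "deriv w z = deriv (\<lambda>z. z * g z) z" by (simp add: wg[abs_def])
    also have "\<dots> = g z + z * deriv g z"
      by (rule DERIV_imp_deriv) (auto intro!: derivative_eq_intros gd that)
    finally show ?thesis .
  qed
  have holdg: "deriv g holomorphic_on ball 0 1" by (intro holomorphic_deriv holg) auto
  have gdd: "(deriv g has_field_derivative deriv (deriv g) 0) (at 0)"
    using holdg by (intro holomorphic_derivI[of _ "ball 0 1"]) auto
  have "deriv (deriv w) 0 = deriv (\<lambda>z. g z + z * deriv g z) 0"
  proof (rule deriv_cong_ev)
    have "eventually (\<lambda>z. z \<in> ball 0 1) (nhds (0::complex))"
      by (rule eventually_nhds_in_open) auto
    then show "\<forall>\<^sub>F x in nhds 0. deriv w x = g x + x * deriv g x"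
      by eventually_elim (simp add: dw)
  qed simp
  also have "\<dots> = 2 * deriv g 0"
    by (rule DERIV_imp_deriv) (auto intro!: derivative_eq_intros gd gdd)
  finally have "deriv (deriv w) 0 = 2 * deriv g 0" .
  moreover have "deriv w 0 = g 0" using dw[of 0] by simp
  ultimately show "norm (deriv (deriv w) 0) / 2 \<le> 1 - (norm (deriv w 0))^2"
    using sp[OF holg gb] by (simp add: norm_mult)
qed


lemma upper:
  assumes "f \<in> classR"
  shows "cmod (inv_coeff2 f) \<le> 1 \<and> cmod (inv_coeff3 f) \<le> 4/3"
proof -
  have holf: "f holomorphic_on ball 0 1" and f0: "f 0 = 0" and df0: "deriv f 0 = 1"
    and re: "\<And>z. z \<in> ball 0 1 \<Longrightarrow> Re (deriv f z) > 0"
    using assms by (auto simp: classR_def classA_def)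
  define p where "p = deriv f"
  have holp: "p holomorphic_on ball 0 1" unfolding p_def by (intro holomorphic_deriv holf) auto
  have p0: "p 0 = 1" using df0 by (simp add: p_def)
  have rep: "Re (p z) > 0" if "norm z < 1" for z using re[of z] that by (simp add: p_def)
  have pne: "p z + 1 \<noteq> 0" if "norm z < 1" for z
  proof
    assume "p z + 1 = 0"
    then have "Re (p z) = -1" by (metis add.commute add_eq_0_iff minus_complex.simps(1) one_complex.simps(1) plus_complex.simps(1) zero_complex.simps(1) diff_0) 
    with rep[OF that] show False by simp
  qed
  define w where "w = (\<lambda>z. (p z - 1) / (p z + 1))"
  have holw: "w holomorphic_on ball 0 1" unfolding w_def using pne by (intro holomorphic_intros holp) auto
  have w0: "w 0 = 0" by (simp add: w_def p0)
  have wb: "norm (w z) < 1" if "norm z < 1" for z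
  proof -
    have "(norm (p z - 1))^2 < (norm (p z + 1))^2"
      using rep[OF that] unfolding cmod_power2 by (simp add: power2_eq_square algebra_simps)
    then have "norm (p z - 1) < norm (p z + 1)" by (simp add: power_less_imp_less_base)
    then show ?thesis using pne[OF that] by (simp add: w_def norm_divide divide_less_eq)
  qed
  have pd: "(p has_field_derivative deriv p z) (at z)" if "norm z < 1" for z
    using holp that by (intro holomorphic_derivI[of _ "ball 0 1"]) auto
  have holdp: "deriv p holomorphic_on ball 0 1" by (intro holomorphic_deriv holp) auto
  have pdd: "(deriv p has_field_derivative deriv (deriv p) 0) (at 0)"
    using holdp by (intro holomorphic_derivI[of _ "ball 0 1"]) auto
  have dw: "deriv w z = 2 * deriv p z / (p z + 1)^2" if "norm z < 1" for z
  proof (rule DERIV_imp_deriv)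
    show "(w has_field_derivative 2 * deriv p z / (p z + 1)^2) (at z)"
      unfolding w_def using pne[OF that]
      by (auto intro!: derivative_eq_intros pd that simp: field_simps power2_eq_square)
  qed
  have "deriv (deriv w) 0 = deriv (\<lambda>z. 2 * deriv p z / (p z + 1)^2) 0"
  proof (rule deriv_cong_ev)
    have "eventually (\<lambda>z. z \<in> ball 0 1) (nhds (0::complex))"
      by (rule eventually_nhds_in_open) auto
    then show "\<forall>\<^sub>F x in nhds 0. deriv w x = 2 * deriv p x / (p x + 1)^2"
      by eventually_elim (simp add: dw)
  qed simp
  also have "\<dots> = deriv (deriv p) 0 / 2 - (deriv p 0)^2 / 2"
    by (rule DERIV_imp_deriv) (auto intro!: derivative_eq_intros pd pdd simp: p0 field_simps power2_eq_square)
  finally have ddw: "deriv (deriv w) 0 = deriv (deriv p) 0 / 2 - (deriv p 0)^2 / 2" .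
  have dw0: "deriv w 0 = deriv p 0 / 2" using dw[of 0] by (simp add: p0)
  have t2: "taylor_coeff f 2 = deriv p 0 / 2"
    by (simp add: taylor_coeff_def numeral_eq_Suc p_def)
  have t3: "taylor_coeff f 3 = deriv (deriv p) 0 / 6"
    by (simp add: taylor_coeff_def numeral_eq_Suc p_def)
  define b1 where "b1 = deriv w 0"
  define b2 where "b2 = deriv (deriv w) 0"
  have B1: "norm b1 \<le> 1" using schwarz2(1)[OF holw w0 wb] by (simp add: b1_def)
  have B2: "norm b2 / 2 \<le> 1 - (norm b1)^2" using schwarz2(2)[OF holw w0 wb] by (simp add: b1_def b2_def)
  have e2: "inv_coeff2 f = - b1" by (simp add: inv_coeff2_def t2 dw0 b1_def)
  have e3: "inv_coeff3 f = - b2 / 3 + 4/3 * b1^2"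
    by (simp add: inv_coeff3_def t2 t3 dw0 ddw b1_def b2_def field_simps power2_eq_square)
  have "cmod (inv_coeff3 f) \<le> norm b2 / 3 + 4/3 * (norm b1)^2"
    unfolding e3 by (rule order_trans[OF norm_triangle_ineq]) (simp add: norm_divide norm_mult norm_power)
  also have "\<dots> \<le> 4/3"
  proof -
    have "(norm b1)^2 \<le> 1" using B1 by (simp add: power_le_one)
    then show ?thesis using B2 by linarith
  qed
  finally show ?thesis using B1 e2 by simp
qed


definition fex :: "complex \<Rightarrow> complex" where
  "fex z = - z - 2 * Ln (1 - z)"

lemma fex_props:
  shows "fex \<in> classR" and "inv_coeff2 fex = -1" and "inv_coeff3 fex = 4/3"
proof -
  have nz: "1 - z \<notin> \<real>\<^sub>\<le>\<^sub>0" if "norm z < 1" for z :: complex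
  proof -
    have "Re z < 1" using that complex_Re_le_cmod[of z] by linarith
    then have "Re (1 - z) > 0" by simp
    then show ?thesis using complex_nonpos_Reals_iff by force
  qed
  have ne: "1 - z \<noteq> 0" if "norm z < 1" for z :: complex
    using that by auto
  have d1: "(fex has_field_derivative (-1 + 2 / (1 - z))) (at z)" if "norm z < 1" for z
    unfolding fex_def[abs_def] using nz[OF that] ne[OF that]
    by (auto intro!: derivative_eq_intros has_field_derivative_Ln simp: field_simps)
  have df: "deriv fex z = -1 + 2 / (1 - z)" if "norm z < 1" for z
    using d1[OF that] by (rule DERIV_imp_deriv)
  have ev: "eventually (\<lambda>z. z \<in> ball 0 1) (nhds z)" if "norm z < 1" for z :: complex
    by (rule eventually_nhds_in_open) (use that in auto)
  have ddf: "deriv (deriv fex) z = 2 / (1 - z)^2" if "norm z < 1" for z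
  proof -
    have "deriv (deriv fex) z = deriv (\<lambda>z. -1 + 2 / (1 - z)) z"
      by (rule deriv_cong_ev) (use ev[OF that] in \<open>auto elim!: eventually_mono simp: df\<close>)
    also have "\<dots> = 2 / (1 - z)^2"
      by (rule DERIV_imp_deriv) (use ne[OF that] in \<open>auto intro!: derivative_eq_intros simp: field_simps power2_eq_square\<close>)
    finally show ?thesis .
  qed
  have dddf: "deriv (deriv (deriv fex)) 0 = 4"
  proof -
    have "deriv (deriv (deriv fex)) 0 = deriv (\<lambda>z. 2 / (1 - z)^2) 0"
      by (rule deriv_cong_ev) (use ev[of 0] in \<open>auto elim!: eventually_mono simp: ddf\<close>)
    also have "\<dots> = 4"
      by (rule DERIV_imp_deriv) (auto intro!: derivative_eq_intros)
    finally show ?thesis .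
  qed
  have t2: "taylor_coeff fex 2 = 1"
    using ddf[of 0] by (simp add: taylor_coeff_def numeral_eq_Suc)
  have t3: "taylor_coeff fex 3 = 2/3"
    using dddf by (simp add: taylor_coeff_def numeral_eq_Suc)
  show "inv_coeff2 fex = -1" by (simp add: inv_coeff2_def t2)
  show "inv_coeff3 fex = 4/3" by (simp add: inv_coeff3_def t2 t3)
  have hol: "fex holomorphic_on ball 0 1"
    unfolding fex_def[abs_def] using nz by (intro holomorphic_intros) auto
  have re: "Re (deriv fex z) > 0" if "norm z < 1" for z
  proof -
    define u where "u = 1 - z"
    have u0: "u \<noteq> 0" using ne[OF that] by (simp add: u_def)
    have "(Re z)^2 + (Im z)^2 < 1" using that by (simp add: cmod_def real_sqrt_less_iff)
    then have "2 * Re u > (Re u)^2 + (Im u)^2" by (simp add: u_def power2_eq_square algebra_simps)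
    moreover have "(Re u)^2 + (Im u)^2 > 0" using u0 by (metis complex_eq_iff sum_power2_gt_zero_iff zero_complex.sel)
    ultimately have "Re (2 / u) > 1" by (simp add: Re_divide divide_simps power2_eq_square)
    then show ?thesis using df[OF that] by (simp add: u_def)
  qed
  show "fex \<in> classR"
    using hol re df[of 0] by (simp add: classR_def classA_def fex_def)
qed


theorem mainTheorem4:
  shows "(\<forall>f \<in> classR. cmod (inv_coeff2 f) \<le> 1 \<and> cmod (inv_coeff3 f) \<le> 4/3)
       \<and> (\<exists>f \<in> classR. cmod (inv_coeff2 f) = 1)
       \<and> (\<exists>f \<in> classR. cmod (inv_coeff3 f) = 4/3)"
proof (intro conjI)
  show "\<forall>f \<in> classR. cmod (inv_coeff2 f) \<le> 1 \<and> cmod (inv_coeff3 f) \<le> 4/3"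
    using upper by blast
  show "\<exists>f \<in> classR. cmod (inv_coeff2 f) = 1"
    using fex_props(1,2) by (intro bexI[of _ fex]) simp_all
  show "\<exists>f \<in> classR. cmod (inv_coeff3 f) = 4/3"
  proof (rule bexI[of _ fex])
    have "cmod (4/3 :: complex) = 4/3" by (simp add: norm_divide)
    then show "cmod (inv_coeff3 fex) = 4/3" unfolding fex_props(3) .
  qed (rule fex_props(1))
qed

end
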